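(* In the PIR-PSI under a storage constraint problem described in the context, fix $N$, $K$ and the cache size $S$. Among all caching schemes, i.e., all $M$ with $S\le M\le K$ and all $(r_1,\dots,r_M)\in[0,1]^M$ with $\sum_{i=1}^M r_i=S$, the uniform caching scheme with $M=K$ (caching the first $\frac{S}{K}L$ symbols of every message) achieves the lowest optimal normalized download cost.
   Context: Model: $N$ non-communicating databases each store the same $K$ independent messages $W_1,\dots,W_K$ of $L$ symbols each. The user has a cache of $SL$ symbols, $S\in[0,K]$. It accesses a random set $\mathbb{H}$ of $M$ messages ($S\le M\le K$) and caches the first $Lr_i$ symbols of the $i$-th accessed message, $\sum_i r_i=S$. The databases know $M$ and $(r_1,\dots,r_M)$ but not $\mathbb{H}$. The user wants $W_\theta$, sends queries independent of the messages, each database answers with a deterministic function of its query and the messages; the user must decode $W_\theta$ with error entropy $o(L)$, and each database's joint distribution of (query, answer, messages) must not depend on $(\theta,\mathbb{H})$. Download $D=\sum_n H(A_n)$, and $D^*=\inf D/L$ over achievable schemes; for a caching scheme with $r_1\ge\dots\ge r_M$, $D^*=1+\frac1N+\dots+\frac1{N^{K-1-M}}+\sum_{j=1}^{M}\frac{1-r_j}{N^{K-j}}$. *)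

theory Defs
  imports Complex_Main "HOL-Library.Multiset"
begin

text \<open>Optimal normalized download cost of the PIR-PSI problem under a storage
constraint, for a caching scheme given by the list r = [r_1,...,r_M] of cached
fractions (M = length r). The capacity formula of the paper assumes
r_1 \<ge> ... \<ge> r_M; for an arbitrary list we first sort it in decreasing order
(the databases know r, so relabelling the accessed messages does not change the cost).\<close>

definition pir_psi_cost :: "nat \<Rightarrow> nat \<Rightarrow> real list \<Rightarrow> real" where
  "pir_psi_cost N K r =
     (let rs = rev (sort r); M = length r in
       (\<Sum>i<K - M. 1 / real N ^ i)
       + (\<Sum>j\<in>{1..M}. (1 - rs ! (j - 1)) / real N ^ (K - j)))"

end

theory Submission
  imports Defs
begin

lemma cost_eq:
  assumes "length r = M" "M \<le> K"
  shows "pir_psi_cost N K r =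
    (\<Sum>k<K. (1 - (if k < M then rev (sort r) ! k else 0)) * (1 / real N ^ (K - 1 - k)))"
proof -
  let ?rs = "rev (sort r)"
  let ?w = "\<lambda>k. 1 / real N ^ (K - 1 - k)"
  let ?s = "\<lambda>k. if k < M then ?rs ! k else 0"
  have A: "(\<Sum>i<K - M. 1 / real N ^ i) = (\<Sum>k\<in>{M..<K}. ?w k)"
    by (rule sum.reindex_bij_witness[where i="\<lambda>k. K - 1 - k" and j="\<lambda>i. K - 1 - i"]) auto
  have B: "(\<Sum>j\<in>{1..M}. (1 - ?rs ! (j - 1)) / real N ^ (K - j))
        = (\<Sum>k<M. (1 - ?rs ! k) / real N ^ (K - 1 - k))"
    by (rule sum.reindex_bij_witness[where i="\<lambda>k. Suc k" and j="\<lambda>j. j - 1"]) auto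
  have C: "(\<Sum>k<K. (1 - ?s k) * ?w k) = (\<Sum>k<M. (1 - ?s k) * ?w k) + (\<Sum>k\<in>{M..<K}. (1 - ?s k) * ?w k)"
  proof -
    have e: "{..<K} = {..<M} \<union> {M..<K}" using assms by auto
    show ?thesis by (subst e, rule sum.union_disjoint) auto
  qed
  have D: "(\<Sum>k<M. (1 - ?s k) * ?w k) = (\<Sum>k<M. (1 - ?rs ! k) / real N ^ (K - 1 - k))"
    by (rule sum.cong) auto
  have E: "(\<Sum>k\<in>{M..<K}. (1 - ?s k) * ?w k) = (\<Sum>k\<in>{M..<K}. ?w k)"
    by (rule sum.cong) auto
  show ?thesis unfolding pir_psi_cost_def Let_def using assms A B C D E by simp
qed

theorem corollary3:
  fixes N K :: nat and S :: real
  assumes "N \<ge> 1" and "K \<ge> 1" and "0 \<le> S" and "S \<le> real K"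
  shows "\<forall>M r. S \<le> real M \<and> M \<le> K \<and> length r = M
            \<and> (\<forall>x\<in>set r. 0 \<le> x \<and> x \<le> 1) \<and> sum_list r = S
          \<longrightarrow> pir_psi_cost N K (replicate K (S / real K)) \<le> pir_psi_cost N K r"
proof (intro allI impI)
  fix M r
  assume h: "S \<le> real M \<and> M \<le> K \<and> length r = M
            \<and> (\<forall>x\<in>set r. 0 \<le> x \<and> x \<le> 1) \<and> sum_list r = S"
  let ?rs = "rev (sort r)"
  let ?w = "\<lambda>k. 1 / real N ^ (K - 1 - k)"
  define s where "s = (\<lambda>k. if k < M then ?rs ! k else 0)"
  have len: "length ?rs = M" using h by simp
  have setrs: "set ?rs = set r" by simp
  have nn: "\<And>k. 0 \<le> s k"
    using h nth_mem[of _ ?rs] len setrs unfolding s_def by (metis order.refl)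
  have c1: "pir_psi_cost N K r = (\<Sum>k<K. (1 - s k) * ?w k)"
    unfolding s_def using cost_eq[of r M K N] h by simp
  have c2: "pir_psi_cost N K (replicate K (S / real K)) = (\<Sum>k<K. (1 - S / real K) * ?w k)"
    using cost_eq[of "replicate K (S / real K)" K K N] by simp
  have sumS: "(\<Sum>k<K. s k) = S"
  proof -
    have "(\<Sum>k<K. s k) = (\<Sum>k<M. s k)"
      using h by (intro sum.mono_neutral_right) (auto simp: s_def)
    also have "\<dots> = (\<Sum>k<M. ?rs ! k)" by (rule sum.cong) (auto simp: s_def)
    also have "\<dots> = sum_list ?rs" using len by (simp add: sum_list_sum_nth atLeast0LessThan)
    also have "\<dots> = sum_list r" by (simp add: sum_list_rev sum_mset_sum_list[symmetric])
    finally show ?thesis using h by simp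
  qed
  have wmono: "\<And>i j. i \<le> j \<Longrightarrow> j < K \<Longrightarrow> ?w i \<le> ?w j"
  proof -
    fix i j :: nat assume "i \<le> j" "j < K"
    have "real N ^ (K - 1 - j) \<le> real N ^ (K - 1 - i)"
      using assms(1) \<open>i \<le> j\<close> by (intro power_increasing) auto
    then show "?w i \<le> ?w j" using assms(1)
      by (intro divide_left_mono) auto
  qed
  have smono: "\<And>i j. i \<le> j \<Longrightarrow> j < K \<Longrightarrow> s j \<le> s i"
  proof -
    fix i j :: nat assume ij: "i \<le> j" "j < K"
    show "s j \<le> s i"
    proof (cases "j < M")
      case True
      have srt: "sorted (sort r)" by simp
      have "sort r ! (M - Suc j) \<le> sort r ! (M - Suc i)"
        using True ij h by (intro sorted_nth_mono[OF srt]) auto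
      then show ?thesis using True ij h by (simp add: s_def rev_nth)
    next
      case False
      then show ?thesis using nn by (simp add: s_def)
    qed
  qed
  have cheb: "real K * (\<Sum>k=0..<K. ?w k * s k) \<le> (\<Sum>k=0..<K. ?w k) * (\<Sum>k=0..<K. s k)"
    by (rule Chebyshev_sum_upper) (use wmono smono in auto)
  have cheb2: "(\<Sum>k<K. s k * ?w k) \<le> S / real K * (\<Sum>k<K. ?w k)"
  proof -
    have Kp: "real K > 0" using assms(2) by simp
    have "real K * (\<Sum>k<K. s k * ?w k) \<le> (\<Sum>k<K. ?w k) * S"
      using cheb sumS by (simp add: atLeast0LessThan mult.commute)
    then show ?thesis using Kp by (simp add: field_simps)
  qed
  have "(\<Sum>k<K. (1 - S / real K) * ?w k) = (\<Sum>k<K. ?w k) - S / real K * (\<Sum>k<K. ?w k)"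
  proof -
    have "(\<Sum>k<K. (1 - S / real K) * ?w k) = (\<Sum>k<K. ?w k - S / real K * ?w k)"
      by (simp only: left_diff_distrib mult_1)
    then show ?thesis by (simp add: sum_subtractf sum_distrib_left)
  qed
  also have "\<dots> \<le> (\<Sum>k<K. ?w k) - (\<Sum>k<K. s k * ?w k)" using cheb2 by simp
  also have "\<dots> = (\<Sum>k<K. (1 - s k) * ?w k)"
    by (simp only: left_diff_distrib mult_1 sum_subtractf)
  finally show "pir_psi_cost N K (replicate K (S / real K)) \<le> pir_psi_cost N K r"
    using c1 c2 by simp
qed

end
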